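(* Let $P,Q$ be probability measures on $(\Omega,\mathcal{M})$ and $\alpha\in\mathbb{R}\setminus\{0,1\}$. Then $$R_\alpha(Q\|P)=\sup_{g\in B(\Omega)}\Big\{\frac{1}{\alpha-1}\log\Big[\int e^{(\alpha-1)g}\,dQ\Big]-\frac1\alpha\log\Big[\int e^{\alpha g}\,dP\Big]\Big\},$$ where $B(\Omega)$ is the set of bounded measurable real-valued functions on $\Omega$.
   Context: Rényi divergence: let $\nu$ be a $\sigma$-finite positive measure with $dP=p\,d\nu$, $dQ=q\,d\nu$. For $\alpha\in(0,1)$, $R_\alpha(Q\|P)=\frac{1}{\alpha(\alpha-1)}\log\int_{p>0}q^\alpha p^{1-\alpha}\,d\nu$; for $\alpha>1$, the same formula if $Q\ll P$ and $R_\alpha(Q\|P)=+\infty$ if $Q\not\ll P$; for $\alpha<0$, $R_\alpha(Q\|P)=R_{1-\alpha}(P\|Q)$. *)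

theory Defs
  imports "HOL-Probability.Probability"
begin

definition ennreal_ln :: "ennreal \<Rightarrow> ereal" where
  "ennreal_ln x = (if x = 0 then -\<infinity> else if x = \<infinity> then \<infinity> else ereal (ln (enn2real x)))"

definition renyi_integral :: "'a measure \<Rightarrow> ('a \<Rightarrow> real) \<Rightarrow> ('a \<Rightarrow> real) \<Rightarrow> real \<Rightarrow> ennreal" where
  "renyi_integral \<nu> p q a =
     (\<integral>\<^sup>+ x. indicator {y. p y > 0} x * ennreal (q x powr a * p x powr (1 - a)) \<partial>\<nu>)"

text \<open>Renyi divergence R_a(Q||P) for a > 0, a \<noteq> 1, where dP = p d nu, dQ = q d nu.\<close>
definition renyi_pos :: "'a measure \<Rightarrow> ('a \<Rightarrow> real) \<Rightarrow> ('a \<Rightarrow> real) \<Rightarrow> real \<Rightarrow> ereal" where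
  "renyi_pos \<nu> p q a =
     (if a > 1 \<and> \<not> absolutely_continuous (density \<nu> p) (density \<nu> q) then \<infinity>
      else ereal (1 / (a * (a - 1))) * ennreal_ln (renyi_integral \<nu> p q a))"

definition renyi_div :: "'a measure \<Rightarrow> ('a \<Rightarrow> real) \<Rightarrow> ('a \<Rightarrow> real) \<Rightarrow> real \<Rightarrow> ereal" where
  "renyi_div \<nu> p q a = (if a < 0 then renyi_pos \<nu> q p (1 - a) else renyi_pos \<nu> p q a)"

definition bounded_measurable :: "'a measure \<Rightarrow> ('a \<Rightarrow> real) set" where
  "bounded_measurable M = {g \<in> borel_measurable M. \<exists>B. \<forall>x\<in>space M. \<bar>g x\<bar> \<le> B}"

end

theory Submission
  imports Defs
begin


lemma dens_int:
  fixes \<nu> :: "'a measure" and d f :: "'a \<Rightarrow> real"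
  assumes dm: "d \<in> borel_measurable \<nu>" and d0: "\<And>x. x\<in>space \<nu> \<Longrightarrow> d x \<ge> 0"
    and dp: "prob_space (density \<nu> d)"
    and fm: "f \<in> borel_measurable \<nu>" and fb: "\<And>x. x \<in> space \<nu> \<Longrightarrow> \<bar>f x\<bar> \<le> C"
  shows "(\<integral>x. exp (f x) \<partial>density \<nu> d) > 0"
    and "ennreal (\<integral>x. exp (f x) \<partial>density \<nu> d) = (\<integral>\<^sup>+x. ennreal (exp (f x) * d x) \<partial>\<nu>)"
proof -
  interpret prob_space "density \<nu> d" by fact
  have em: "(\<lambda>x. exp (f x)) \<in> borel_measurable (density \<nu> d)" using fm by simp
  have int: "integrable (density \<nu> d) (\<lambda>x. exp (f x))"
    apply (rule integrable_const_bound[where B="exp C"])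
    using fb em apply (auto intro!: AE_I2)
    using fb abs_le_D1 by blast
  have "(\<integral>x. exp (- C) \<partial>density \<nu> d) \<le> (\<integral>x. exp (f x) \<partial>density \<nu> d)"
    apply (rule integral_mono[OF _ int])
    using fb by (auto intro!: AE_I2) (smt (verit) exp_le_cancel_iff fb)
  moreover have "(\<integral>x. exp (- C) \<partial>density \<nu> d) = exp (- C)" using prob_space by simp
  ultimately show "(\<integral>x. exp (f x) \<partial>density \<nu> d) > 0"
    by (smt (verit) exp_gt_zero)
  have "ennreal (\<integral>x. exp (f x) \<partial>density \<nu> d) = (\<integral>\<^sup>+x. ennreal (exp (f x)) \<partial>density \<nu> d)"
    by (rule nn_integral_eq_integral[symmetric, OF int]) auto
  also have "\<dots> = (\<integral>\<^sup>+x. ennreal (d x) * ennreal (exp (f x)) \<partial>\<nu>)"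
    by (rule nn_integral_density) (use dm fm in auto)
  also have "\<dots> = (\<integral>\<^sup>+x. ennreal (exp (f x) * d x) \<partial>\<nu>)"
    by (rule nn_integral_cong) (simp add: d0 ennreal_mult'' mult.commute)
  finally show "ennreal (\<integral>x. exp (f x) \<partial>density \<nu> d) = (\<integral>\<^sup>+x. ennreal (exp (f x) * d x) \<partial>\<nu>)" .
qed

lemma dens_one:
  fixes \<nu> :: "'a measure" and d :: "'a \<Rightarrow> real"
  assumes dm: "d \<in> borel_measurable \<nu>" and dp: "prob_space (density \<nu> d)"
  shows "(\<integral>\<^sup>+x. ennreal (d x) \<partial>\<nu>) = 1"
proof -
  have "1 = emeasure (density \<nu> d) (space \<nu>)"
    using prob_space.emeasure_space_1[OF dp] by simp
  also have "\<dots> = (\<integral>\<^sup>+x. ennreal (d x) * indicator (space \<nu>) x \<partial>\<nu>)"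
    by (rule emeasure_density) (use dm in auto)
  also have "\<dots> = (\<integral>\<^sup>+x. ennreal (d x) \<partial>\<nu>)"
    by (rule nn_integral_cong) auto
  finally show ?thesis by simp
qed

lemma young_pt:
  fixes a x y F H :: real
  assumes "0 < a" "a < 1" "x \<ge> 0" "y \<ge> 0" "F > 0" "H > 0"
  shows "x powr a * y powr (1 - a) \<le> (F powr a * H powr (1-a) * a / F) * x + (F powr a * H powr (1-a) * (1-a) / H) * y"
proof (cases "x = 0 \<or> y = 0")
  case True
  then show ?thesis using assms by auto
next
  case False
  then have xy: "x > 0" "y > 0" using assms by auto
  have "(x/F) powr a * (y/H) powr (1-a) \<le> a * (x/F) + (1-a) * (y/H)"
    by (rule Youngs_inequality_0) (use assms xy in auto)
  then have "F powr a * H powr (1-a) * ((x/F) powr a * (y/H) powr (1-a)) \<le> F powr a * H powr (1-a) * (a * (x/F) + (1-a) * (y/H))"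
    by (rule mult_left_mono) (use assms in auto)
  moreover have "F powr a * H powr (1-a) * ((x/F) powr a * (y/H) powr (1-a)) = x powr a * y powr (1 - a)"
    using assms xy by (simp add: powr_divide)
  ultimately show ?thesis by (simp add: algebra_simps)
qed

lemma holder_nn:
  fixes M :: "'a measure" and f h :: "'a \<Rightarrow> real" and a :: real
  assumes a: "0 < a" "a < 1"
    and fm: "f \<in> borel_measurable M" and hm: "h \<in> borel_measurable M"
    and f0: "\<And>x. x \<in> space M \<Longrightarrow> f x \<ge> 0" and h0: "\<And>x. x \<in> space M \<Longrightarrow> h x \<ge> 0"
    and fF: "(\<integral>\<^sup>+x. ennreal (f x) \<partial>M) = ennreal F" and hH: "(\<integral>\<^sup>+x. ennreal (h x) \<partial>M) = ennreal H"
    and F0: "F \<ge> 0" and H0: "H \<ge> 0"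
  shows "(\<integral>\<^sup>+x. ennreal (f x powr a * h x powr (1 - a)) \<partial>M) \<le> ennreal (F powr a * H powr (1 - a))"
proof (cases "F = 0 \<or> H = 0")
  case True
  then have "(AE x in M. ennreal (f x) = 0) \<or> (AE x in M. ennreal (h x) = 0)"
    using fF hH fm hm by (auto simp: nn_integral_0_iff_AE[symmetric])
  then have "AE x in M. ennreal (f x powr a * h x powr (1 - a)) = 0"
  proof
    assume "AE x in M. ennreal (f x) = 0"
    then show ?thesis
      apply (rule AE_mp) apply (rule AE_I2)
      subgoal for x using f0[of x] h0[of x] by (auto simp: ennreal_eq_0_iff)
      done
  next
    assume "AE x in M. ennreal (h x) = 0"
    then show ?thesis
      apply (rule AE_mp) apply (rule AE_I2)
      subgoal for x using f0[of x] h0[of x] by (auto simp: ennreal_eq_0_iff)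
      done
  qed
  then have "(\<integral>\<^sup>+x. ennreal (f x powr a * h x powr (1 - a)) \<partial>M) = 0"
    using fm hm by (subst nn_integral_0_iff_AE) auto
  then show ?thesis by simp
next
  case False
  then have FH: "F > 0" "H > 0" using F0 H0 by auto
  define K1 where "K1 = F powr a * H powr (1-a) * a / F"
  define K2 where "K2 = F powr a * H powr (1-a) * (1-a) / H"
  have K: "K1 \<ge> 0" "K2 \<ge> 0" using FH a by (auto simp: K1_def K2_def)
  have "(\<integral>\<^sup>+x. ennreal (f x powr a * h x powr (1 - a)) \<partial>M) \<le> (\<integral>\<^sup>+x. ennreal K1 * ennreal (f x) + ennreal K2 * ennreal (h x) \<partial>M)"
  proof (rule nn_integral_mono)
    fix x assume x: "x \<in> space M"
    have "f x powr a * h x powr (1 - a) \<le> K1 * f x + K2 * h x"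
      using young_pt[OF a f0[OF x] h0[OF x] FH] by (simp add: K1_def K2_def)
    then have "ennreal (f x powr a * h x powr (1 - a)) \<le> ennreal (K1 * f x + K2 * h x)"
      by (rule ennreal_leI)
    also have "\<dots> = ennreal K1 * ennreal (f x) + ennreal K2 * ennreal (h x)"
      using K f0[OF x] h0[OF x] by (simp add: ennreal_plus[symmetric] ennreal_mult[symmetric] del: ennreal_plus)
    finally show "ennreal (f x powr a * h x powr (1 - a)) \<le> ennreal K1 * ennreal (f x) + ennreal K2 * ennreal (h x)" .
  qed
  also have "\<dots> = ennreal K1 * ennreal F + ennreal K2 * ennreal H"
    using fm hm by (simp add: nn_integral_add nn_integral_cmult fF hH)
  also have "\<dots> = ennreal (K1 * F + K2 * H)"
    using K FH by (simp add: ennreal_plus[symmetric] ennreal_mult[symmetric] del: ennreal_plus)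
  also have "K1 * F + K2 * H = F powr a * H powr (1 - a)"
    using FH by (simp add: K1_def K2_def field_simps)
  finally show ?thesis .
qed




lemma pw_gt1:
  fixes p q t a :: real
  assumes "p > 0" "q \<ge> 0" "a > 1"
  shows "(q powr a * p powr (1 - a)) powr (1 / a) * (exp (a * t) * p) powr (1 - 1 / a) = exp ((a - 1) * t) * q"
proof -
  have "(q powr a * p powr (1 - a)) powr (1 / a) * (exp (a * t) * p) powr (1 - 1 / a)
      = q * (p powr ((1 - a) / a) * p powr (1 - 1/a)) * exp (a * t * (1 - 1/a))"
    using assms by (simp add: powr_mult powr_powr exp_powr_real)
  also have "p powr ((1 - a) / a) * p powr (1 - 1/a) = 1"
    using assms by (simp add: powr_add[symmetric] field_simps)
  also have "a * t * (1 - 1/a) = (a - 1) * t" using assms by (simp add: field_simps)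
  finally show ?thesis by simp
qed

lemma pw_lt1:
  fixes p q t a :: real
  assumes "p > 0" "q \<ge> 0" "0 < a" "a < 1"
  shows "(exp ((a - 1) * t) * q) powr a * (exp (a * t) * p) powr (1 - a) = q powr a * p powr (1 - a)"
proof -
  have "(exp ((a - 1) * t) * q) powr a * (exp (a * t) * p) powr (1 - a)
      = exp ((a - 1) * t * a + a * t * (1 - a)) * (q powr a * p powr (1 - a))"
    using assms by (simp add: powr_mult exp_powr_real exp_add)
  also have "(a - 1) * t * a + a * t * (1 - a) = 0" by (simp add: algebra_simps)
  finally show ?thesis by simp
qed

lemma bm_density: "bounded_measurable (density M d) = bounded_measurable M"
  unfolding bounded_measurable_def by simp

definition Fv :: "'a measure \<Rightarrow> ('a\<Rightarrow>real) \<Rightarrow> ('a\<Rightarrow>real) \<Rightarrow> real \<Rightarrow> ('a \<Rightarrow> real) \<Rightarrow> real" where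
 "Fv \<nu> p q \<alpha> g = 1/(\<alpha>-1) * ln (\<integral>x. exp ((\<alpha>-1) * g x) \<partial>density \<nu> q) - 1/\<alpha> * ln (\<integral>x. exp (\<alpha> * g x) \<partial>density \<nu> p)"

lemma powr_max_le:
  fixes s d a :: real
  assumes "0 \<le> s" "0 \<le> d" "0 < a"
  shows "(max s d) powr a \<le> s powr a + d powr a"
  using assms by (cases "s \<le> d") (auto simp: max_def)

lemma ratio1:
  fixes p q a :: real
  assumes "p > 0" "q \<ge> 0"
  shows "(q / p) powr a * p = q powr a * p powr (1 - a)"
  using assms by (simp add: powr_divide powr_diff)

lemma ratio2:
  fixes p q a :: real
  assumes "p > 0" "q > 0"
  shows "(q / p) powr (a - 1) * q = q powr a * p powr (1 - a)"
  using assms by (simp add: powr_divide powr_diff field_simps)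





context
  fixes \<nu> :: "'a measure" and p q :: "'a \<Rightarrow> real"
  assumes pm: "p \<in> borel_measurable \<nu>" and qm: "q \<in> borel_measurable \<nu>"
    and p0: "\<And>x. x \<in> space \<nu> \<Longrightarrow> p x \<ge> 0" and q0: "\<And>x. x \<in> space \<nu> \<Longrightarrow> q x \<ge> 0"
    and Pp: "prob_space (density \<nu> p)" and Qp: "prob_space (density \<nu> q)"
begin

lemma AB:
  assumes g: "g \<in> bounded_measurable \<nu>"
  shows "(\<integral>x. exp (c * g x) \<partial>density \<nu> q) > 0"
    and "ennreal (\<integral>x. exp (c * g x) \<partial>density \<nu> q) = (\<integral>\<^sup>+x. ennreal (exp (c * g x) * q x) \<partial>\<nu>)"
    and "(\<integral>x. exp (c * g x) \<partial>density \<nu> p) > 0"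
    and "ennreal (\<integral>x. exp (c * g x) \<partial>density \<nu> p) = (\<integral>\<^sup>+x. ennreal (exp (c * g x) * p x) \<partial>\<nu>)"
proof -
  obtain B where gm: "g \<in> borel_measurable \<nu>" and B: "\<And>x. x \<in> space \<nu> \<Longrightarrow> \<bar>g x\<bar> \<le> B"
    using g unfolding bounded_measurable_def by auto
  have cgm: "(\<lambda>x. c * g x) \<in> borel_measurable \<nu>" using gm by simp
  have cB: "\<And>x. x \<in> space \<nu> \<Longrightarrow> \<bar>c * g x\<bar> \<le> \<bar>c\<bar> * B"
    using B by (simp add: abs_mult mult_left_mono)
  show "(\<integral>x. exp (c * g x) \<partial>density \<nu> q) > 0"
    and "ennreal (\<integral>x. exp (c * g x) \<partial>density \<nu> q) = (\<integral>\<^sup>+x. ennreal (exp (c * g x) * q x) \<partial>\<nu>)"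
    using dens_int[OF qm q0 Qp cgm cB] by auto
  show "(\<integral>x. exp (c * g x) \<partial>density \<nu> p) > 0"
    and "ennreal (\<integral>x. exp (c * g x) \<partial>density \<nu> p) = (\<integral>\<^sup>+x. ennreal (exp (c * g x) * p x) \<partial>\<nu>)"
    using dens_int[OF pm p0 Pp cgm cB] by auto
qed

lemma upper_lt1:
  assumes a: "0 < \<alpha>" "\<alpha> < 1" and g: "g \<in> bounded_measurable \<nu>"
  shows "ereal (1/(\<alpha>-1) * ln (\<integral>x. exp ((\<alpha>-1) * g x) \<partial>density \<nu> q) - 1/\<alpha> * ln (\<integral>x. exp (\<alpha> * g x) \<partial>density \<nu> p))
     \<le> renyi_pos \<nu> p q \<alpha>"
proof -
  define A where "A = (\<integral>x. exp ((\<alpha>-1) * g x) \<partial>density \<nu> q)"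
  define B where "B = (\<integral>x. exp (\<alpha> * g x) \<partial>density \<nu> p)"
  have A0: "A > 0" and Ae: "ennreal A = (\<integral>\<^sup>+x. ennreal (exp ((\<alpha>-1) * g x) * q x) \<partial>\<nu>)"
    using AB[OF g] unfolding A_def by auto
  have B0: "B > 0" and Be: "ennreal B = (\<integral>\<^sup>+x. ennreal (exp (\<alpha> * g x) * p x) \<partial>\<nu>)"
    using AB[OF g] unfolding B_def by auto
  have gm: "g \<in> borel_measurable \<nu>" using g unfolding bounded_measurable_def by auto
  have "renyi_integral \<nu> p q \<alpha> \<le> (\<integral>\<^sup>+x. ennreal ((exp ((\<alpha>-1) * g x) * q x) powr \<alpha> * (exp (\<alpha> * g x) * p x) powr (1-\<alpha>)) \<partial>\<nu>)"
    unfolding renyi_integral_def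
  proof (rule nn_integral_mono)
    fix x assume x: "x \<in> space \<nu>"
    show "indicator {y. p y > 0} x * ennreal (q x powr \<alpha> * p x powr (1 - \<alpha>))
       \<le> ennreal ((exp ((\<alpha>-1) * g x) * q x) powr \<alpha> * (exp (\<alpha> * g x) * p x) powr (1-\<alpha>))"
    proof (cases "p x > 0")
      case True then show ?thesis using pw_lt1[OF True q0[OF x] a, of "g x"] by simp
    next
      case False then show ?thesis by simp
    qed
  qed
  also have "\<dots> \<le> ennreal (A powr \<alpha> * B powr (1-\<alpha>))"
    by (rule holder_nn) (use a gm pm qm p0 q0 Ae[symmetric] Be[symmetric] A0 B0 in auto)
  finally have IL: "renyi_integral \<nu> p q \<alpha> \<le> ennreal (A powr \<alpha> * B powr (1-\<alpha>))" .
  have "renyi_integral \<nu> p q \<alpha> \<noteq> \<top>" using IL by (auto simp: top_unique)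
  then obtain Ir where Ir1: "renyi_integral \<nu> p q \<alpha> = ennreal Ir" "Ir \<ge> 0"
    by (cases "renyi_integral \<nu> p q \<alpha>") auto
  then have Ir: "renyi_integral \<nu> p q \<alpha> = ennreal Ir" "Ir \<ge> 0" "Ir \<le> A powr \<alpha> * B powr (1-\<alpha>)"
    using IL by (auto simp: ennreal_le_iff)
  have c: "1 / (\<alpha> * (\<alpha> - 1)) < 0" using a by (simp add: divide_neg_pos mult_pos_neg)
  show ?thesis
  proof (cases "Ir = 0")
    case True
    then have "renyi_pos \<nu> p q \<alpha> = \<infinity>"
      using a c unfolding renyi_pos_def ennreal_ln_def Ir by auto
    then show ?thesis by simp
  next
    case False
    then have Ip: "Ir > 0" using Ir by auto
    have R: "renyi_pos \<nu> p q \<alpha> = ereal (1 / (\<alpha> * (\<alpha> - 1)) * ln Ir)"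
      using a Ip unfolding renyi_pos_def ennreal_ln_def Ir by auto
    have "ln Ir \<le> ln (A powr \<alpha> * B powr (1-\<alpha>))" using Ip Ir by simp
    also have "\<dots> = \<alpha> * ln A + (1 - \<alpha>) * ln B" using A0 B0 by (simp add: ln_mult ln_powr)
    finally have "1 / (\<alpha> * (\<alpha> - 1)) * (\<alpha> * ln A + (1 - \<alpha>) * ln B) \<le> 1 / (\<alpha> * (\<alpha> - 1)) * ln Ir"
      using c by (intro mult_left_mono_neg) auto
    moreover have "1 / (\<alpha> * (\<alpha> - 1)) * (\<alpha> * ln A + (1 - \<alpha>) * ln B) = 1/(\<alpha>-1) * ln A - 1/\<alpha> * ln B"
      using a by (simp add: field_simps)
    ultimately show ?thesis unfolding R A_def[symmetric] B_def[symmetric] by simp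
  qed
qed

lemma upper_gt1:
  assumes a: "1 < \<alpha>" and g: "g \<in> bounded_measurable \<nu>"
  shows "ereal (1/(\<alpha>-1) * ln (\<integral>x. exp ((\<alpha>-1) * g x) \<partial>density \<nu> q) - 1/\<alpha> * ln (\<integral>x. exp (\<alpha> * g x) \<partial>density \<nu> p))
     \<le> renyi_pos \<nu> p q \<alpha>"
proof (cases "absolutely_continuous (density \<nu> p) (density \<nu> q)")
  case False
  then have "renyi_pos \<nu> p q \<alpha> = \<infinity>" using a unfolding renyi_pos_def by auto
  then show ?thesis by simp
next
  case True
  define S where "S = {x\<in>space \<nu>. p x \<le> 0}"
  have Sm: "S \<in> sets \<nu>" unfolding S_def using pm by measurable
  have "S \<in> null_sets (density \<nu> p)"
    using pm Sm by (subst null_sets_density_iff) (auto simp: S_def ennreal_eq_0_iff intro!: AE_I2)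
  then have "S \<in> null_sets (density \<nu> q)" using True unfolding absolutely_continuous_def by auto
  then have "AE x in \<nu>. x \<in> S \<longrightarrow> ennreal (q x) = 0"
    using qm by (subst (asm) null_sets_density_iff) auto
  then have qz: "AE x in \<nu>. p x \<le> 0 \<longrightarrow> q x = 0"
    by (rule AE_mp) (auto intro!: AE_I2 simp: S_def dest: q0)
  define A where "A = (\<integral>x. exp ((\<alpha>-1) * g x) \<partial>density \<nu> q)"
  define B where "B = (\<integral>x. exp (\<alpha> * g x) \<partial>density \<nu> p)"
  have A0: "A > 0" and Ae: "ennreal A = (\<integral>\<^sup>+x. ennreal (exp ((\<alpha>-1) * g x) * q x) \<partial>\<nu>)"
    using AB[OF g] unfolding A_def by auto
  have B0: "B > 0" and Be: "ennreal B = (\<integral>\<^sup>+x. ennreal (exp (\<alpha> * g x) * p x) \<partial>\<nu>)"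
    using AB[OF g] unfolding B_def by auto
  have gm: "g \<in> borel_measurable \<nu>" using g unfolding bounded_measurable_def by auto
  define f1 where "f1 x = (if p x > 0 then q x powr \<alpha> * p x powr (1-\<alpha>) else 0)" for x
  have f1m: "f1 \<in> borel_measurable \<nu>" unfolding f1_def using pm qm by measurable
  have f10: "\<And>x. x \<in> space \<nu> \<Longrightarrow> f1 x \<ge> 0" unfolding f1_def by auto
  have I: "renyi_integral \<nu> p q \<alpha> = (\<integral>\<^sup>+x. ennreal (f1 x) \<partial>\<nu>)"
    unfolding renyi_integral_def f1_def by (rule nn_integral_cong) (auto simp: indicator_def)
  have Ae2: "ennreal A = (\<integral>\<^sup>+x. ennreal (f1 x powr (1/\<alpha>) * (exp (\<alpha> * g x) * p x) powr (1 - 1/\<alpha>)) \<partial>\<nu>)"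
    unfolding Ae
  proof (rule nn_integral_cong_AE)
    show "AE x in \<nu>. ennreal (exp ((\<alpha>-1) * g x) * q x) = ennreal (f1 x powr (1/\<alpha>) * (exp (\<alpha> * g x) * p x) powr (1 - 1/\<alpha>))"
      using qz
    proof (rule AE_mp, intro AE_I2 impI)
      fix x assume x: "x \<in> space \<nu>" and h: "p x \<le> 0 \<longrightarrow> q x = 0"
      show "ennreal (exp ((\<alpha>-1) * g x) * q x) = ennreal (f1 x powr (1/\<alpha>) * (exp (\<alpha> * g x) * p x) powr (1 - 1/\<alpha>))"
      proof (cases "p x > 0")
        case True then show ?thesis using pw_gt1[OF True q0[OF x] a, of "g x"] by (simp add: f1_def)
      next
        case False then show ?thesis using h by (simp add: f1_def)
      qed
    qed
  qed
  show ?thesis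
  proof (cases "renyi_integral \<nu> p q \<alpha> = \<top>")
    case True2: True
    have "renyi_pos \<nu> p q \<alpha> = \<infinity>" using a True True2 unfolding renyi_pos_def ennreal_ln_def by auto
    then show ?thesis by simp
  next
    case False
    then obtain Ir where Ir: "renyi_integral \<nu> p q \<alpha> = ennreal Ir" "Ir \<ge> 0"
      by (cases "renyi_integral \<nu> p q \<alpha>") auto
    have "ennreal A \<le> ennreal (Ir powr (1/\<alpha>) * B powr (1 - 1/\<alpha>))"
      unfolding Ae2
      apply (rule holder_nn)
      using a f1m f10 gm pm p0 Ir I Be[symmetric] B0 by auto
    then have AL: "A \<le> Ir powr (1/\<alpha>) * B powr (1 - 1/\<alpha>)"
      using Ir B0 by (simp add: ennreal_le_iff)
    have Ip: "Ir > 0"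
    proof (rule ccontr)
      assume "\<not> Ir > 0" then have "Ir = 0" using Ir by auto
      then show False using AL A0 a by simp
    qed
    have R: "renyi_pos \<nu> p q \<alpha> = ereal (1 / (\<alpha> * (\<alpha> - 1)) * ln Ir)"
      using a Ip True unfolding renyi_pos_def ennreal_ln_def Ir by auto
    have "ln A \<le> ln (Ir powr (1/\<alpha>) * B powr (1 - 1/\<alpha>))" using A0 AL by simp
    also have "\<dots> = 1/\<alpha> * ln Ir + (1 - 1/\<alpha>) * ln B" using Ip B0 by (simp add: ln_mult ln_powr)
    finally have "1/(\<alpha>-1) * ln A \<le> 1/(\<alpha>-1) * (1/\<alpha> * ln Ir + (1 - 1/\<alpha>) * ln B)"
      using a by (intro mult_left_mono) auto
    also have "\<dots> = 1 / (\<alpha> * (\<alpha> - 1)) * ln Ir + 1/\<alpha> * ln B"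
      using a by (simp add: field_simps)
    finally show ?thesis unfolding R A_def[symmetric] B_def[symmetric] by simp
  qed
qed

lemma lower_nac:
  assumes a: "1 < \<alpha>" and nac: "\<not> absolutely_continuous (density \<nu> p) (density \<nu> q)"
  shows "(SUP g\<in>bounded_measurable \<nu>. ereal (Fv \<nu> p q \<alpha> g)) = \<infinity>"
proof (rule ereal_top)
  fix Bd :: real
  obtain S where S: "S \<in> null_sets (density \<nu> p)" "S \<notin> null_sets (density \<nu> q)"
    using nac unfolding absolutely_continuous_def by auto
  have Sm: "S \<in> sets \<nu>" using S(1) by (auto dest: null_setsD2)
  interpret Q: prob_space "density \<nu> q" by (rule Qp)
  interpret P: prob_space "density \<nu> p" by (rule Pp)
  define qS where "qS = measure (density \<nu> q) S"
  have qS: "qS > 0" using S(2) Sm unfolding qS_def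
    by (simp add: Q.emeasure_eq_measure null_sets_def zero_less_measure_iff)
  define n where "n = Bd - ln qS / (\<alpha> - 1)"
  define g where "g x = n * indicator S x" for x
  have gm: "g \<in> borel_measurable \<nu>" unfolding g_def using Sm by measurable
  have gB: "g \<in> bounded_measurable \<nu>" unfolding bounded_measurable_def
    using gm by (auto simp: g_def indicator_def intro!: exI[of _ "\<bar>n\<bar>"])
  define A where "A = (\<integral>x. exp ((\<alpha>-1) * g x) \<partial>density \<nu> q)"
  have int1: "integrable (density \<nu> q) (\<lambda>x. exp ((\<alpha>-1) * g x))"
    apply (rule Q.integrable_const_bound[where B="exp ((\<alpha>-1) * \<bar>n\<bar>)"])
    prefer 2 using gm apply simp
    using gm a by (auto intro!: AE_I2 simp: g_def indicator_def)
  have int2: "integrable (density \<nu> q) (\<lambda>x. exp ((\<alpha>-1) * n) * indicator S x)"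
    using Sm by (intro integrable_mult_right integrable_real_indicator) (auto simp: Q.emeasure_eq_measure)
  have "exp ((\<alpha>-1) * n) * qS = (\<integral>x. exp ((\<alpha>-1) * n) * indicator S x \<partial>density \<nu> q)"
    using Sm by (simp add: qS_def)
  also have "\<dots> \<le> A" unfolding A_def
    by (rule integral_mono[OF int2 int1]) (auto simp: g_def indicator_def)
  finally have AL: "exp ((\<alpha>-1) * n) * qS \<le> A" .
  have "(\<integral>x. exp (\<alpha> * g x) \<partial>density \<nu> p) = (\<integral>x. 1 \<partial>density \<nu> p)"
  proof (rule integral_cong_AE)
    show "AE x in density \<nu> p. exp (\<alpha> * g x) = 1"
      using AE_not_in[OF S(1)] by (rule AE_mp) (auto simp: g_def)
  qed (use gm in auto)
  then have B1: "(\<integral>x. exp (\<alpha> * g x) \<partial>density \<nu> p) = 1" using P.prob_space by simp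
  have "ln (exp ((\<alpha>-1) * n) * qS) \<le> ln A"
    using AL qS by (subst ln_le_cancel_iff) (auto intro: less_le_trans[OF _ AL])
  then have "1/(\<alpha>-1) * ln (exp ((\<alpha>-1) * n) * qS) \<le> 1/(\<alpha>-1) * ln A"
    using a by (intro mult_left_mono) auto
  moreover have "1/(\<alpha>-1) * ln (exp ((\<alpha>-1) * n) * qS) = Bd"
  proof -
    have "ln (exp ((\<alpha>-1) * n) * qS) = (\<alpha>-1) * n + ln qS" using qS by (simp add: ln_mult)
    moreover have "1/(\<alpha>-1) * ((\<alpha>-1) * n + ln qS) = n + ln qS / (\<alpha>-1)" using a by (simp add: field_simps)
    ultimately show ?thesis by (simp add: n_def)
  qed
  ultimately have "Bd \<le> Fv \<nu> p q \<alpha> g" unfolding Fv_def B1 A_def by simp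
  then show "ereal Bd \<le> (SUP g\<in>bounded_measurable \<nu>. ereal (Fv \<nu> p q \<alpha> g))"
    using gB by (intro SUP_upper2[of g]) auto
qed

lemma core_gt1:
  assumes a: "1 < \<alpha>" and N: "N \<ge> 0"
    and Jr: "(\<integral>\<^sup>+x. ennreal ((if p x > 0 then min (max 0 (q x / p x)) N else 0) powr \<alpha> * p x) \<partial>\<nu>) = ennreal Jr"
    and J0: "Jr > 0" and y: "y < 1/(\<alpha>*(\<alpha>-1)) * ln Jr"
  shows "ereal y \<le> (SUP g\<in>bounded_measurable \<nu>. ereal (Fv \<nu> p q \<alpha> g))"
proof -
  define s where "s x = (if p x > 0 then min (max 0 (q x / p x)) N else 0)" for x
  have sm: "s \<in> borel_measurable \<nu>" unfolding s_def using pm qm by measurable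
  have s0: "0 \<le> s x" "s x \<le> N" for x using N by (auto simp: s_def)
  have sq: "s x * p x \<le> q x" if x: "x \<in> space \<nu>" for x
  proof (cases "p x > 0")
    case True
    then have "s x \<le> q x / p x" using q0[OF x] by (simp add: s_def)
    then show ?thesis using True by (simp add: pos_le_divide_eq)
  next
    case False then show ?thesis using q0[OF x] by (simp add: s_def)
  qed
  have Jr': "(\<integral>\<^sup>+x. ennreal (s x powr \<alpha> * p x) \<partial>\<nu>) = ennreal Jr" using Jr by (simp add: s_def)
  define K where "K = \<alpha>/(\<alpha>-1) * ln Jr - \<alpha> * y"
  have "\<alpha> * y < \<alpha> * (1/(\<alpha>*(\<alpha>-1)) * ln Jr)" using a y by (intro mult_strict_left_mono) auto
  also have "\<alpha> * (1/(\<alpha>*(\<alpha>-1)) * ln Jr) = ln Jr / (\<alpha>-1)" using a by (simp add: field_simps)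
  finally have ay: "\<alpha> * y < ln Jr / (\<alpha>-1)" .
  have "\<alpha>/(\<alpha>-1) * ln Jr = ln Jr + ln Jr / (\<alpha>-1)" using a by (simp add: field_simps)
  then have "ln Jr < K" using ay by (simp add: K_def)
  then have KJ: "Jr < exp K" using J0 by (metis exp_ln exp_less_cancel_iff)
  define e where "e = (exp K - Jr)/2"
  have e0: "e > 0" using KJ by (simp add: e_def)
  define \<delta> where "\<delta> = e powr (1/\<alpha>)"
  have d0: "\<delta> > 0" using e0 by (simp add: \<delta>_def)
  have de: "\<delta> powr \<alpha> = e" using e0 a by (simp add: \<delta>_def powr_powr)
  define t where "t x = max (s x) \<delta>" for x
  have t0: "t x > 0" for x using d0 by (simp add: t_def)
  define g where "g x = ln (t x)" for x
  have gm: "g \<in> borel_measurable \<nu>" unfolding g_def t_def using sm by measurable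
  have gb: "\<bar>g x\<bar> \<le> \<bar>ln \<delta>\<bar> + \<bar>ln (max \<delta> N)\<bar>" for x
  proof -
    have "ln \<delta> \<le> g x" unfolding g_def using d0 t0[of x] by (simp add: t_def)
    moreover have "g x \<le> ln (max \<delta> N)" unfolding g_def using d0 t0[of x] s0[of x]
      by (subst ln_le_cancel_iff) (auto simp: t_def)
    ultimately show ?thesis by linarith
  qed
  have gB: "g \<in> bounded_measurable \<nu>" unfolding bounded_measurable_def using gm gb by blast
  have expg: "exp (c * g x) = t x powr c" for c x using t0[of x] by (simp add: g_def powr_def mult.commute)
  define A where "A = (\<integral>x. exp ((\<alpha>-1) * g x) \<partial>density \<nu> q)"
  define B where "B = (\<integral>x. exp (\<alpha> * g x) \<partial>density \<nu> p)"
  have A0: "A > 0" and Ae: "ennreal A = (\<integral>\<^sup>+x. ennreal (t x powr (\<alpha>-1) * q x) \<partial>\<nu>)"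
    using AB[OF gB] unfolding A_def expg by auto
  have B0: "B > 0" and Be: "ennreal B = (\<integral>\<^sup>+x. ennreal (t x powr \<alpha> * p x) \<partial>\<nu>)"
    using AB[OF gB] unfolding B_def expg by auto
  have "ennreal Jr \<le> ennreal A" unfolding Ae Jr'[symmetric]
  proof (rule nn_integral_mono)
    fix x assume x: "x \<in> space \<nu>"
    have "s x powr \<alpha> * p x = s x powr (\<alpha> - 1) * (s x * p x)"
    proof -
      have "s x powr \<alpha> = s x powr ((\<alpha>-1)+1)" by simp
      also have "\<dots> = s x powr (\<alpha>-1) * s x powr 1" by (rule powr_add)
      also have "s x powr 1 = s x" using s0[of x] by simp
      finally show ?thesis by simp
    qed
    also have "\<dots> \<le> s x powr (\<alpha> - 1) * q x" using sq[OF x] by (intro mult_left_mono) auto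
    also have "\<dots> \<le> t x powr (\<alpha> - 1) * q x"
      using q0[OF x] s0[of x] a by (intro mult_right_mono powr_mono2) (auto simp: t_def)
    finally show "ennreal (s x powr \<alpha> * p x) \<le> ennreal (t x powr (\<alpha>-1) * q x)" by (rule ennreal_leI)
  qed
  then have AJ: "Jr \<le> A" using A0 by (simp add: ennreal_le_iff)
  have "ennreal B \<le> (\<integral>\<^sup>+x. ennreal (s x powr \<alpha> * p x) + ennreal e * ennreal (p x) \<partial>\<nu>)"
    unfolding Be
  proof (rule nn_integral_mono)
    fix x assume x: "x \<in> space \<nu>"
    have "t x powr \<alpha> * p x \<le> (s x powr \<alpha> + \<delta> powr \<alpha>) * p x"
      unfolding t_def using p0[OF x] s0[of x] d0 a by (intro mult_right_mono powr_max_le) auto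
    also have "\<dots> = s x powr \<alpha> * p x + e * p x" by (simp add: de algebra_simps)
    finally have "ennreal (t x powr \<alpha> * p x) \<le> ennreal (s x powr \<alpha> * p x + e * p x)" by (rule ennreal_leI)
    also have "\<dots> = ennreal (s x powr \<alpha> * p x) + ennreal e * ennreal (p x)"
      using p0[OF x] e0 by (simp add: ennreal_plus[symmetric] ennreal_mult[symmetric] del: ennreal_plus)
    finally show "ennreal (t x powr \<alpha> * p x) \<le> ennreal (s x powr \<alpha> * p x) + ennreal e * ennreal (p x)" .
  qed
  also have "\<dots> = ennreal Jr + ennreal e * 1"
    using sm pm by (simp add: nn_integral_add nn_integral_cmult Jr' dens_one[OF pm Pp])
  also have "\<dots> = ennreal (Jr + e)" using J0 e0 by (simp add: ennreal_plus)
  finally have "ennreal B \<le> ennreal (Jr + e)" .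
  then have BJ: "B \<le> Jr + e" using J0 e0 by (subst (asm) ennreal_le_iff) auto
  have "B < exp K" using BJ KJ unfolding e_def by argo
  then have lnB: "ln B < K" using B0 by (metis exp_ln exp_less_cancel_iff)
  have lnA: "ln Jr \<le> ln A" using AJ J0 by simp
  have "K = \<alpha> * (ln Jr / (\<alpha>-1) - y)" unfolding K_def by (simp add: algebra_simps)
  then have "1/\<alpha> * K = ln Jr / (\<alpha>-1) - y" using a by simp
  then have "y = 1/(\<alpha>-1) * ln Jr - 1/\<alpha> * K" by simp
  also have "\<dots> < 1/(\<alpha>-1) * ln A - 1/\<alpha> * ln B"
  proof -
    have "1/(\<alpha>-1) * ln Jr \<le> 1/(\<alpha>-1) * ln A" using a lnA by (intro mult_left_mono) auto
    moreover have "1/\<alpha> * ln B < 1/\<alpha> * K" using a lnB by (intro mult_strict_left_mono) auto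
    ultimately show ?thesis by linarith
  qed
  finally have "y < Fv \<nu> p q \<alpha> g" unfolding Fv_def A_def B_def .
  then show ?thesis using gB by (intro SUP_upper2[of g]) auto
qed

lemma lower_gt1:
  assumes a: "1 < \<alpha>"
  shows "renyi_pos \<nu> p q \<alpha> \<le> (SUP g\<in>bounded_measurable \<nu>. ereal (Fv \<nu> p q \<alpha> g))"
proof (cases "absolutely_continuous (density \<nu> p) (density \<nu> q)")
  case False
  then show ?thesis using lower_nac[OF a] by simp
next
  case True
  define sn where "sn n x = (if p x > 0 then min (max 0 (q x / p x)) (real n) else 0)" for n :: nat and x
  define J where "J n = (\<integral>\<^sup>+x. ennreal (sn n x powr \<alpha> * p x) \<partial>\<nu>)" for n
  define f1 where "f1 x = (if p x > 0 then q x powr \<alpha> * p x powr (1-\<alpha>) else 0)" for x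
  have I: "renyi_integral \<nu> p q \<alpha> = (\<integral>\<^sup>+x. ennreal (f1 x) \<partial>\<nu>)"
    unfolding renyi_integral_def f1_def by (rule nn_integral_cong) (auto simp: indicator_def)
  have snm: "(\<lambda>x. ennreal (sn n x powr \<alpha> * p x)) \<in> borel_measurable \<nu>" for n
    unfolding sn_def using pm qm by measurable
  have inc: "incseq (\<lambda>n x. ennreal (sn n x powr \<alpha> * p x))"
  proof (rule incseq_SucI, rule le_funI)
    fix n x
    show "ennreal (sn n x powr \<alpha> * p x) \<le> ennreal (sn (Suc n) x powr \<alpha> * p x)"
    proof (cases "p x > 0")
      case True
      then show ?thesis unfolding sn_def using a
        by (intro ennreal_leI mult_right_mono powr_mono2) auto
    qed (simp add: sn_def)
  qed
  have pt: "(SUP n. ennreal (sn n x powr \<alpha> * p x)) = ennreal (f1 x)" if x: "x \<in> space \<nu>" for x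
  proof (cases "p x > 0")
    case False then show ?thesis by (simp add: sn_def f1_def)
  next
    case True
    define r where "r = q x / p x"
    have r0: "r \<ge> 0" using q0[OF x] True by (simp add: r_def)
    have f1r: "f1 x = r powr \<alpha> * p x" using ratio1[OF True q0[OF x]] by (simp add: f1_def r_def True)
    show ?thesis
    proof (rule antisym)
      show "(SUP n. ennreal (sn n x powr \<alpha> * p x)) \<le> ennreal (f1 x)"
      proof (rule SUP_least)
        fix n show "ennreal (sn n x powr \<alpha> * p x) \<le> ennreal (f1 x)"
          unfolding f1r sn_def r_def[symmetric] using True r0 a
          by (intro ennreal_leI mult_right_mono powr_mono2) auto
      qed
      have "sn (nat \<lceil>r\<rceil>) x = r" unfolding sn_def r_def[symmetric] using True r0
        by (simp add: min_def)
      then show "ennreal (f1 x) \<le> (SUP n. ennreal (sn n x powr \<alpha> * p x))"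
        unfolding f1r by (intro SUP_upper2[of "nat \<lceil>r\<rceil>"]) auto
    qed
  qed
  have IJ: "renyi_integral \<nu> p q \<alpha> = (SUP n. J n)"
  proof -
    have "renyi_integral \<nu> p q \<alpha> = (\<integral>\<^sup>+x. (SUP n. ennreal (sn n x powr \<alpha> * p x)) \<partial>\<nu>)"
      unfolding I by (rule nn_integral_cong) (simp add: pt)
    also have "\<dots> = (SUP n. J n)" unfolding J_def
      by (rule nn_integral_monotone_convergence_SUP[OF inc snm])
    finally show ?thesis .
  qed
  have Jfin: "J n \<le> ennreal (real n powr \<alpha>)" for n
  proof -
    have "J n \<le> (\<integral>\<^sup>+x. ennreal (real n powr \<alpha>) * ennreal (p x) \<partial>\<nu>)" unfolding J_def
    proof (rule nn_integral_mono)
      fix x assume x: "x \<in> space \<nu>"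
      have "sn n x powr \<alpha> * p x \<le> real n powr \<alpha> * p x"
        unfolding sn_def using p0[OF x] a by (intro mult_right_mono powr_mono2) auto
      then show "ennreal (sn n x powr \<alpha> * p x) \<le> ennreal (real n powr \<alpha>) * ennreal (p x)"
        using p0[OF x] by (simp add: ennreal_mult[symmetric] ennreal_leI)
    qed
    also have "\<dots> = ennreal (real n powr \<alpha>)"
      using pm by (simp add: nn_integral_cmult dens_one[OF pm Pp])
    finally show ?thesis .
  qed
  have c: "1 / (\<alpha> * (\<alpha> - 1)) > 0" using a by simp
  show ?thesis
  proof (rule dense_le)
    fix x assume x: "x < renyi_pos \<nu> p q \<alpha>"
    show "x \<le> (SUP g\<in>bounded_measurable \<nu>. ereal (Fv \<nu> p q \<alpha> g))"
    proof (cases x)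
      case (real y)
      have R: "renyi_pos \<nu> p q \<alpha> = ereal (1 / (\<alpha> * (\<alpha> - 1))) * ennreal_ln (renyi_integral \<nu> p q \<alpha>)"
        using True unfolding renyi_pos_def by simp
      have "ennreal (exp (y * (\<alpha> * (\<alpha> - 1)))) < renyi_integral \<nu> p q \<alpha>"
      proof (cases "renyi_integral \<nu> p q \<alpha> = \<top>")
        case True then show ?thesis by simp
      next
        case False
        then obtain Ir where Ir: "renyi_integral \<nu> p q \<alpha> = ennreal Ir" "Ir \<ge> 0"
          by (cases "renyi_integral \<nu> p q \<alpha>") auto
        have "Ir \<noteq> 0"
        proof
          assume "Ir = 0"
          then have "renyi_pos \<nu> p q \<alpha> = - \<infinity>" using c a unfolding R Ir ennreal_ln_def by simp
          then show False using x by simp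
        qed
        then have Ip: "Ir > 0" using Ir by auto
        have "ereal y < ereal (1 / (\<alpha> * (\<alpha> - 1)) * ln Ir)"
          using x Ip unfolding R Ir real ennreal_ln_def by simp
        then have "y < 1 / (\<alpha> * (\<alpha> - 1)) * ln Ir" by simp
        then have "y * (\<alpha> * (\<alpha> - 1)) < ln Ir" using a by (simp add: field_simps)
        then have "exp (y * (\<alpha> * (\<alpha> - 1))) < Ir" using Ip by (metis exp_less_cancel_iff exp_ln)
        then show ?thesis unfolding Ir by (simp add: ennreal_less_iff)
      qed
      then obtain n where n: "ennreal (exp (y * (\<alpha> * (\<alpha> - 1)))) < J n"
        unfolding IJ by (auto simp: less_SUP_iff)
      have "J n \<noteq> \<top>" using Jfin[of n] by (auto simp: top_unique)
      then obtain Jr where Jr: "J n = ennreal Jr" "Jr \<ge> 0" by (cases "J n") auto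
      have "exp (y * (\<alpha> * (\<alpha> - 1))) < Jr" using n Jr by (simp add: ennreal_less_iff)
      then have Jp: "Jr > 0" and "y * (\<alpha> * (\<alpha> - 1)) < ln Jr"
        using exp_gt_zero[of "y * (\<alpha> * (\<alpha> - 1))"] by (linarith, metis exp_less_cancel_iff exp_ln exp_gt_zero less_trans)
      then have yJ: "y < 1 / (\<alpha> * (\<alpha> - 1)) * ln Jr" using a by (simp add: field_simps)
      have "ereal y \<le> (SUP g\<in>bounded_measurable \<nu>. ereal (Fv \<nu> p q \<alpha> g))"
        by (rule core_gt1[OF a _ _ Jp yJ, of "real n"]) (use Jr in \<open>auto simp: J_def sn_def\<close>)
      then show ?thesis using real by simp
    qed (use x in auto)
  qed
qed

lemma core_lt1:
  assumes a: "0 < \<alpha>" "\<alpha> < 1" and Ir: "renyi_integral \<nu> p q \<alpha> = ennreal Ir" "Ir \<ge> 0"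
    and IY: "Ir < exp Y"
  shows "ereal (Y / (\<alpha> * (\<alpha> - 1))) \<le> (SUP g\<in>bounded_measurable \<nu>. ereal (Fv \<nu> p q \<alpha> g))"
proof -
  define D where "D = exp Y - Ir"
  have D0: "D > 0" using IY by (simp add: D_def)
  have l1: "((\<lambda>N::real. N powr (\<alpha>-1)) \<longlongrightarrow> 0) at_top"
    by (rule tendsto_neg_powr) (use a in \<open>auto simp: filterlim_ident\<close>)
  have l2: "((\<lambda>N::real. N powr (-\<alpha>)) \<longlongrightarrow> 0) at_top"
    by (rule tendsto_neg_powr) (use a in \<open>auto simp: filterlim_ident\<close>)
  have "eventually (\<lambda>N::real. N powr (\<alpha>-1) < D \<and> N powr (-\<alpha>) < D \<and> N \<ge> 1) at_top"
    using order_tendstoD(2)[OF l1 D0] order_tendstoD(2)[OF l2 D0] eventually_ge_at_top[of "1::real"]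
    by eventually_elim auto
  then obtain N :: real where N: "N powr (\<alpha>-1) < D" "N powr (-\<alpha>) < D" "N \<ge> 1"
    unfolding eventually_at_top_linorder by auto
  define s where "s x = (if p x > 0 then min (max 0 (q x / p x)) N else N)" for x
  have sm: "s \<in> borel_measurable \<nu>" unfolding s_def using pm qm by measurable
  have s0: "0 \<le> s x" "s x \<le> N" for x using N by (auto simp: s_def)
  define t where "t x = max (s x) (1/N)" for x
  have iN: "1/N > 0" "1/N \<le> N" using N(3) by (auto simp: field_simps) (metis mult_mono' mult_1 order_trans zero_le_one)
  have t0: "t x > 0" "t x \<ge> 1/N" "t x \<le> N" for x
  proof -
    show "t x \<ge> 1/N" by (simp add: t_def)
    then show "t x > 0" using iN(1) by linarith
    show "t x \<le> N" using iN(2) s0[of x] by (simp add: t_def)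
  qed
  define g where "g x = ln (t x)" for x
  have gm: "g \<in> borel_measurable \<nu>" unfolding g_def t_def using sm by measurable
  have gb: "\<bar>g x\<bar> \<le> ln N" for x
  proof -
    have "ln (1/N) \<le> g x" unfolding g_def using t0[of x] N by (subst ln_le_cancel_iff) auto
    moreover have "g x \<le> ln N" unfolding g_def using t0[of x] N by (subst ln_le_cancel_iff) auto
    moreover have "ln (1/N) = - ln N" using N by (simp add: ln_div)
    ultimately show ?thesis by linarith
  qed
  have gB: "g \<in> bounded_measurable \<nu>" unfolding bounded_measurable_def using gm gb by blast
  have expg: "exp (c * g x) = t x powr c" for c x using t0[of x] by (simp add: g_def powr_def mult.commute)
  define f1 where "f1 x = (if p x > 0 then q x powr \<alpha> * p x powr (1-\<alpha>) else 0)" for x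
  have f10: "f1 x \<ge> 0" for x by (simp add: f1_def)
  have f1m: "f1 \<in> borel_measurable \<nu>" unfolding f1_def using pm qm by measurable
  have I: "(\<integral>\<^sup>+x. ennreal (f1 x) \<partial>\<nu>) = ennreal Ir"
    unfolding Ir(1)[symmetric] renyi_integral_def f1_def by (rule nn_integral_cong) (auto simp: indicator_def)
  define A where "A = (\<integral>x. exp ((\<alpha>-1) * g x) \<partial>density \<nu> q)"
  define B where "B = (\<integral>x. exp (\<alpha> * g x) \<partial>density \<nu> p)"
  have A0: "A > 0" and Ae: "ennreal A = (\<integral>\<^sup>+x. ennreal (t x powr (\<alpha>-1) * q x) \<partial>\<nu>)"
    using AB[OF gB] unfolding A_def expg by auto
  have B0: "B > 0" and Be: "ennreal B = (\<integral>\<^sup>+x. ennreal (t x powr \<alpha> * p x) \<partial>\<nu>)"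
    using AB[OF gB] unfolding B_def expg by auto
  have "ennreal A \<le> (\<integral>\<^sup>+x. ennreal (f1 x) + ennreal (N powr (\<alpha>-1)) * ennreal (q x) \<partial>\<nu>)"
    unfolding Ae
  proof (rule nn_integral_mono)
    fix x assume x: "x \<in> space \<nu>"
    have "t x powr (\<alpha>-1) * q x \<le> f1 x + N powr (\<alpha>-1) * q x"
    proof (cases "p x > 0")
      case False
      then have "t x = N" using iN(2) by (simp add: t_def s_def max_def)
      then show ?thesis using False by (simp add: f1_def)
    next
      case True
      show ?thesis
      proof (cases "q x > 0")
        case False
        then have "q x = 0" using q0[OF x] by simp
        then show ?thesis using f10[of x] by simp
      next
        case qp: True
        define r where "r = q x / p x"
        have r0: "r > 0" using True qp by (simp add: r_def)
        have sr: "s x = min r N" using True r0 by (simp add: s_def r_def[symmetric])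
        have spos: "s x > 0" using sr r0 N by simp
        have "t x powr (\<alpha>-1) \<le> s x powr (\<alpha>-1)"
          using spos a by (intro powr_mono2') (auto simp: t_def)
        then have "t x powr (\<alpha>-1) * q x \<le> s x powr (\<alpha>-1) * q x" using qp by (intro mult_right_mono) auto
        also have "\<dots> \<le> f1 x + N powr (\<alpha>-1) * q x"
        proof (cases "r \<le> N")
          case True2: True
          then have "s x powr (\<alpha>-1) * q x = f1 x"
            using ratio2[OF True qp] sr by (simp add: f1_def True r_def)
          then show ?thesis using qp by simp
        next
          case False
          then have "s x = N" using sr by simp
          then show ?thesis using f10[of x] by simp
        qed
        finally show ?thesis .
      qed
    qed
    then have "ennreal (t x powr (\<alpha>-1) * q x) \<le> ennreal (f1 x + N powr (\<alpha>-1) * q x)" by (rule ennreal_leI)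
    also have "\<dots> = ennreal (f1 x) + ennreal (N powr (\<alpha>-1)) * ennreal (q x)"
      using q0[OF x] f10[of x] by (simp add: ennreal_plus[symmetric] ennreal_mult[symmetric] del: ennreal_plus)
    finally show "ennreal (t x powr (\<alpha>-1) * q x) \<le> ennreal (f1 x) + ennreal (N powr (\<alpha>-1)) * ennreal (q x)" .
  qed
  also have "\<dots> = ennreal Ir + ennreal (N powr (\<alpha>-1)) * 1"
    using f1m qm by (simp add: nn_integral_add nn_integral_cmult I dens_one[OF qm Qp])
  also have "\<dots> = ennreal (Ir + N powr (\<alpha>-1))" using Ir by (simp add: ennreal_plus)
  finally have "ennreal A \<le> ennreal (Ir + N powr (\<alpha>-1))" .
  then have AL: "A \<le> Ir + N powr (\<alpha>-1)" using Ir by (subst (asm) ennreal_le_iff) auto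
  have "ennreal B \<le> (\<integral>\<^sup>+x. ennreal (f1 x) + ennreal (N powr (-\<alpha>)) * ennreal (p x) \<partial>\<nu>)"
    unfolding Be
  proof (rule nn_integral_mono)
    fix x assume x: "x \<in> space \<nu>"
    have "t x powr \<alpha> * p x \<le> f1 x + N powr (-\<alpha>) * p x"
    proof (cases "p x > 0")
      case False
      then have "p x = 0" using p0[OF x] by simp
      then show ?thesis using f10[of x] by simp
    next
      case True
      define r where "r = q x / p x"
      have r0: "r \<ge> 0" using True q0[OF x] by (simp add: r_def)
      have sr: "s x \<le> r" using True r0 by (simp add: s_def r_def[symmetric])
      have "t x powr \<alpha> \<le> s x powr \<alpha> + (1/N) powr \<alpha>"
        unfolding t_def using s0[of x] N a by (intro powr_max_le) auto
      also have "\<dots> \<le> r powr \<alpha> + N powr (-\<alpha>)"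
        using sr s0[of x] a N by (auto intro!: add_mono powr_mono2 simp: powr_divide powr_minus_divide)
      finally have "t x powr \<alpha> * p x \<le> (r powr \<alpha> + N powr (-\<alpha>)) * p x"
        using True by (intro mult_right_mono) auto
      also have "\<dots> = f1 x + N powr (-\<alpha>) * p x"
        using ratio1[OF True q0[OF x]] by (simp add: f1_def True r_def algebra_simps)
      finally show ?thesis .
    qed
    then have "ennreal (t x powr \<alpha> * p x) \<le> ennreal (f1 x + N powr (-\<alpha>) * p x)" by (rule ennreal_leI)
    also have "\<dots> = ennreal (f1 x) + ennreal (N powr (-\<alpha>)) * ennreal (p x)"
      using p0[OF x] f10[of x] by (simp add: ennreal_plus[symmetric] ennreal_mult[symmetric] del: ennreal_plus)
    finally show "ennreal (t x powr \<alpha> * p x) \<le> ennreal (f1 x) + ennreal (N powr (-\<alpha>)) * ennreal (p x)" .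
  qed
  also have "\<dots> = ennreal Ir + ennreal (N powr (-\<alpha>)) * 1"
    using f1m pm by (simp add: nn_integral_add nn_integral_cmult I dens_one[OF pm Pp])
  also have "\<dots> = ennreal (Ir + N powr (-\<alpha>))" using Ir by (simp add: ennreal_plus)
  finally have "ennreal B \<le> ennreal (Ir + N powr (-\<alpha>))" .
  then have BL: "B \<le> Ir + N powr (-\<alpha>)" using Ir by (subst (asm) ennreal_le_iff) auto
  have "A < exp Y" using AL N(1) unfolding D_def by linarith
  then have lnA: "ln A < Y" using A0 by (metis exp_ln exp_less_cancel_iff)
  have "B < exp Y" using BL N(2) unfolding D_def by linarith
  then have lnB: "ln B < Y" using B0 by (metis exp_ln exp_less_cancel_iff)
  have "Y / (\<alpha> * (\<alpha> - 1)) = 1/(\<alpha>-1) * Y - 1/\<alpha> * Y" using a by (simp add: field_simps)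
  also have "\<dots> < 1/(\<alpha>-1) * ln A - 1/\<alpha> * ln B"
  proof -
    have "1/(\<alpha>-1) * Y < 1/(\<alpha>-1) * ln A" using a lnA by (intro mult_strict_left_mono_neg) auto
    moreover have "1/\<alpha> * ln B < 1/\<alpha> * Y" using a lnB by (intro mult_strict_left_mono) auto
    ultimately show ?thesis by linarith
  qed
  finally have "Y / (\<alpha> * (\<alpha> - 1)) < Fv \<nu> p q \<alpha> g" unfolding Fv_def A_def B_def .
  then show ?thesis using gB by (intro SUP_upper2[of g]) auto
qed

lemma lower_lt1:
  assumes a: "0 < \<alpha>" "\<alpha> < 1"
  shows "renyi_pos \<nu> p q \<alpha> \<le> (SUP g\<in>bounded_measurable \<nu>. ereal (Fv \<nu> p q \<alpha> g))"
proof (rule dense_le)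
  fix x assume x: "x < renyi_pos \<nu> p q \<alpha>"
  have R: "renyi_pos \<nu> p q \<alpha> = ereal (1 / (\<alpha> * (\<alpha> - 1))) * ennreal_ln (renyi_integral \<nu> p q \<alpha>)"
    using a unfolding renyi_pos_def by simp
  define k where "k = \<alpha> * (\<alpha> - 1)"
  have k: "k < 0" using a by (simp add: k_def mult_pos_neg)
  show "x \<le> (SUP g\<in>bounded_measurable \<nu>. ereal (Fv \<nu> p q \<alpha> g))"
  proof (cases x)
    case (real y)
    have "renyi_integral \<nu> p q \<alpha> \<noteq> \<top>"
    proof
      assume "renyi_integral \<nu> p q \<alpha> = \<top>"
      then have "renyi_pos \<nu> p q \<alpha> = - \<infinity>" using k unfolding R ennreal_ln_def k_def[symmetric]
        by (simp add: divide_neg_pos)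
      then show False using x by simp
    qed
    then obtain Ir where Ir: "renyi_integral \<nu> p q \<alpha> = ennreal Ir" "Ir \<ge> 0"
      by (cases "renyi_integral \<nu> p q \<alpha>") auto
    have IY: "Ir < exp (y * k)"
    proof (cases "Ir = 0")
      case True then show ?thesis by simp
    next
      case False
      then have Ip: "Ir > 0" using Ir by auto
      have "ereal y < ereal (1 / k * ln Ir)"
        using x Ip unfolding R Ir real ennreal_ln_def k_def by simp
      then have "y < 1 / k * ln Ir" by simp
      then have "k * (1 / k * ln Ir) < k * y" using k by (intro mult_strict_left_mono_neg) auto
      then have "ln Ir < y * k" using k by (simp add: mult.commute)
      then show ?thesis using Ip by (metis exp_less_cancel_iff exp_ln)
    qed
    have "ereal (y * k / (\<alpha> * (\<alpha> - 1))) \<le> (SUP g\<in>bounded_measurable \<nu>. ereal (Fv \<nu> p q \<alpha> g))"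
      by (rule core_lt1[OF a Ir IY])
    moreover have "y * k / (\<alpha> * (\<alpha> - 1)) = y" using k unfolding k_def[symmetric] by simp
    ultimately show ?thesis using real by simp
  qed (use x in auto)
qed

lemma pos_formula:
  assumes a: "0 < \<alpha>" "\<alpha> \<noteq> 1"
  shows "renyi_pos \<nu> p q \<alpha> = (SUP g\<in>bounded_measurable \<nu>. ereal (Fv \<nu> p q \<alpha> g))"
proof (rule antisym)
  show "renyi_pos \<nu> p q \<alpha> \<le> (SUP g\<in>bounded_measurable \<nu>. ereal (Fv \<nu> p q \<alpha> g))"
    using lower_lt1 lower_gt1 a by (cases "\<alpha> < 1") auto
  show "(SUP g\<in>bounded_measurable \<nu>. ereal (Fv \<nu> p q \<alpha> g)) \<le> renyi_pos \<nu> p q \<alpha>"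
  proof (rule SUP_least)
    fix g assume g: "g \<in> bounded_measurable \<nu>"
    show "ereal (Fv \<nu> p q \<alpha> g) \<le> renyi_pos \<nu> p q \<alpha>"
      unfolding Fv_def using upper_lt1[OF _ _ g] upper_gt1[OF _ g] a by (cases "\<alpha> < 1") auto
  qed
qed

end



lemma bm_neg: "g \<in> bounded_measurable M \<Longrightarrow> (\<lambda>x. - g x) \<in> bounded_measurable M"
  unfolding bounded_measurable_def by auto

theorem mainTheorem9:
  fixes \<nu> :: "'a measure" and p q :: "'a \<Rightarrow> real" and P Q :: "'a measure" and \<alpha> :: real
  assumes "sigma_finite_measure \<nu>"
    and "p \<in> borel_measurable \<nu>" and "q \<in> borel_measurable \<nu>"
    and "\<And>x. x \<in> space \<nu> \<Longrightarrow> p x \<ge> 0" and "\<And>x. x \<in> space \<nu> \<Longrightarrow> q x \<ge> 0"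
    and "P = density \<nu> p" and "Q = density \<nu> q"
    and "prob_space P" and "prob_space Q"
    and "\<alpha> \<noteq> 0" and "\<alpha> \<noteq> 1"
  shows "renyi_div \<nu> p q \<alpha> =
    (SUP g\<in>bounded_measurable P.
       ereal (1 / (\<alpha> - 1) * ln (\<integral>x. exp ((\<alpha> - 1) * g x) \<partial>Q)
              - 1 / \<alpha> * ln (\<integral>x. exp (\<alpha> * g x) \<partial>P)))"
proof -
  have Pp: "prob_space (density \<nu> p)" and Qp: "prob_space (density \<nu> q)"
    using assms(6-9) by auto
  have BM: "bounded_measurable P = bounded_measurable \<nu>" using assms(6) by (simp add: bm_density)
  define RHS where "RHS h = ereal (1 / (\<alpha> - 1) * ln (\<integral>x. exp ((\<alpha> - 1) * h x) \<partial>Q)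
              - 1 / \<alpha> * ln (\<integral>x. exp (\<alpha> * h x) \<partial>P))" for h
  show ?thesis
  proof (cases "\<alpha> < 0")
    case False
    then have a: "0 < \<alpha>" using assms(10) by simp
    have "renyi_div \<nu> p q \<alpha> = renyi_pos \<nu> p q \<alpha>" using False by (simp add: renyi_div_def)
    also have "\<dots> = (SUP g\<in>bounded_measurable \<nu>. ereal (Fv \<nu> p q \<alpha> g))"
      by (rule pos_formula[where \<nu>=\<nu> and p=p and q=q, OF assms(2,3) _ _ Pp Qp a assms(11)])
        (use assms(4,5) in auto)
    finally show ?thesis unfolding Fv_def assms(6,7) bm_density .
  next
    case True
    have a: "0 < 1 - \<alpha>" "1 - \<alpha> \<noteq> 1" using True by auto
    have "renyi_div \<nu> p q \<alpha> = renyi_pos \<nu> q p (1 - \<alpha>)" using True by (simp add: renyi_div_def)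
    also have "\<dots> = (SUP g\<in>bounded_measurable \<nu>. ereal (Fv \<nu> q p (1 - \<alpha>) g))"
      by (rule pos_formula[where \<nu>=\<nu> and p=q and q=p, OF assms(3,2) _ _ Qp Pp a])
        (use assms(4,5) in auto)
    also have "\<dots> = (SUP g\<in>bounded_measurable \<nu>. RHS (\<lambda>x. - g x))"
    proof (rule SUP_cong[OF refl])
      fix g :: "'a \<Rightarrow> real"
      have e1: "1 - \<alpha> - 1 = - \<alpha>" by simp
      have "1 / (1 - \<alpha> - 1) = - (1 / \<alpha>)" by simp
      moreover have "1 / (1 - \<alpha>) = - (1 / (\<alpha> - 1))" by (simp add: minus_divide_right)
      moreover have "(\<lambda>x. exp ((1 - \<alpha> - 1) * g x)) = (\<lambda>x. exp (\<alpha> * - g x))" by simp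
      moreover have "(\<lambda>x. exp ((1 - \<alpha>) * g x)) = (\<lambda>x. exp ((\<alpha> - 1) * - g x))" by (simp add: algebra_simps)
      ultimately show "ereal (Fv \<nu> q p (1 - \<alpha>) g) = RHS (\<lambda>x. - g x)"
        unfolding Fv_def RHS_def assms(6,7) by simp
    qed
    also have "\<dots> = (SUP h\<in>(\<lambda>g x. - g x) ` bounded_measurable \<nu>. RHS h)"
      by (simp add: image_image)
    also have "(\<lambda>g x. - g x) ` bounded_measurable \<nu> = bounded_measurable \<nu>"
    proof
      show "(\<lambda>g x. - g x) ` bounded_measurable \<nu> \<subseteq> bounded_measurable \<nu>" using bm_neg by auto
      show "bounded_measurable \<nu> \<subseteq> (\<lambda>g x. - g x) ` bounded_measurable \<nu>"
      proof
        fix h assume "h \<in> bounded_measurable \<nu>"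
        then have "(\<lambda>x. - h x) \<in> bounded_measurable \<nu>" by (rule bm_neg)
        then show "h \<in> (\<lambda>g x. - g x) ` bounded_measurable \<nu>"
          by (intro image_eqI[where x="\<lambda>x. - h x"]) auto
      qed
    qed
    finally show ?thesis unfolding RHS_def assms(6,7) bm_density .
  qed
qed


end
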